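(* For every integer $k\ge1$, the $2\times2$ absorbing game \[ \begin{bmatrix}0;\,(\tfrac1k,k^* ) & 1^*\\ 1^* & k^*\end{bmatrix}, \] i.e. with $g_{11}=0$, $q_{11}=1/k$, $w_{11}=k$; $g_{12}=w_{12}=1$, $q_{12}=1$; $g_{21}=w_{21}=1$, $q_{21}=1$; $g_{22}=w_{22}=k$, $q_{22}=1$, has limit value $v=\lim_{\lambda\to0}v_\lambda=\sqrt k$. *)

theory Defs
  imports Complex_Main
begin

text \<open>2x2 matrices are functions nat => nat => real on indices 0,1 (row index i: player 1,
  the maximizer; column index j: player 2, the minimizer).\<close>

definition mix2 :: "real \<Rightarrow> real \<Rightarrow> (nat \<Rightarrow> nat \<Rightarrow> real) \<Rightarrow> real" where
  "mix2 x y A = x * y * A 0 0 + x * (1 - y) * A 0 1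
              + (1 - x) * y * A 1 0 + (1 - x) * (1 - y) * A 1 1"

definition val2 :: "(nat \<Rightarrow> nat \<Rightarrow> real) \<Rightarrow> real" where
  "val2 A = (SUP x\<in>{0..1}. INF y\<in>{0..1}. mix2 x y A)"

text \<open>Discounted value of the 2x2 absorbing game with non-absorbing payoffs g, absorption
  probabilities q and absorbing payoffs w: the unique fixed point of the Shapley operator
  v \<mapsto> val [ l g + (1 - l)(q w + (1 - q) v) ].\<close>
definition disc_value ::
  "(nat \<Rightarrow> nat \<Rightarrow> real) \<Rightarrow> (nat \<Rightarrow> nat \<Rightarrow> real) \<Rightarrow> (nat \<Rightarrow> nat \<Rightarrow> real) \<Rightarrow> real \<Rightarrow> real" where
  "disc_value g q w l =
     (THE v. v = val2 (\<lambda>i j. l * g i j + (1 - l) * (q i j * w i j + (1 - q i j) * v)))"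

end

theory Submission imports Defs begin

lemma inf_mix: "(INF y\<in>{0..1}. mix2 x y A) = min (mix2 x 0 A) (mix2 x 1 A)"
proof -
  have eq: "\<And>y. mix2 x y A = (1-y)*mix2 x 0 A + y * mix2 x 1 A"
    by (simp add: mix2_def algebra_simps)
  show ?thesis
  proof (rule cInf_eq_minimum)
    show "min (mix2 x 0 A) (mix2 x 1 A) \<in> (\<lambda>y. mix2 x y A) ` {0..1}"
      by (cases "mix2 x 0 A \<le> mix2 x 1 A") (auto simp: min_def intro!: image_eqI[where x=0] image_eqI[where x=1])
  next
    fix z assume "z \<in> (\<lambda>y. mix2 x y A) ` {0..1}"
    then obtain y where y: "0 \<le> y" "y \<le> 1" "z = mix2 x y A" by auto
    have "(1-y)*min (mix2 x 0 A) (mix2 x 1 A) \<le> (1-y)*mix2 x 0 A"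
      using y by (intro mult_left_mono) auto
    moreover have "y*min (mix2 x 0 A) (mix2 x 1 A) \<le> y*mix2 x 1 A"
      using y by (intro mult_left_mono) auto
    ultimately show "min (mix2 x 0 A) (mix2 x 1 A) \<le> z" using y eq[of y] by (simp add: algebra_simps)
  qed
qed

lemma val2_form:
  fixes K :: real
  assumes K: "K \<ge> 1" and A: "A 0 1 = 1" "A 1 0 = 1" "A 1 1 = K"
  shows "val2 A = (if A 0 0 \<le> 1 then 1 else (A 0 0 * K - 1)/(A 0 0 + K - 2))"
proof -
  define a where "a = A 0 0"
  have m0: "\<And>x. mix2 x 0 A = x + (1-x)*K" and m1: "\<And>x. mix2 x 1 A = x*a + (1-x)"
    using A by (simp_all add: mix2_def a_def)
  have v: "val2 A = (SUP x\<in>{0..1}. min (x + (1-x)*K) (x*a + (1-x)))"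
    unfolding val2_def inf_mix m0 m1 ..
  show ?thesis
  proof (cases "a \<le> 1")
    case True
    have "(SUP x\<in>{0..1}. min (x + (1-x)*K) (x*a + (1-x))) = 1"
    proof (rule cSup_eq_maximum)
      show "1 \<in> (\<lambda>x. min (x + (1-x)*K) (x*a + (1-x))) ` {0..1}"
        using K by (intro image_eqI[where x=0]) auto
    next
      fix z assume "z \<in> (\<lambda>x. min (x + (1-x)*K) (x*a + (1-x))) ` {0..1}"
      then obtain x where x: "0 \<le> x" "x \<le> 1" "z = min (x + (1-x)*K) (x*a + (1-x))" by auto
      have "x*a \<le> x*1" using x True by (intro mult_left_mono) auto
      then show "z \<le> 1" using x by auto
    qed
    then show ?thesis using v True a_def by simp
  next
    case False
    define xs where "xs = (K-1)/(a+K-2)"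
    have pos: "a + K - 2 > 0" using False K by simp
    have xs01: "0 \<le> xs" "xs \<le> 1" using pos False K by (auto simp: xs_def field_simps)
    have xd: "xs*(a+K-2) = K-1" using pos unfolding xs_def by simp
    have "(xs + (1-xs)*K)*(a+K-2) = a*K-1"
    proof -
      have "(xs + (1-xs)*K)*(a+K-2) = xs*(a+K-2)*(1-K) + K*(a+K-2)" by (simp add: algebra_simps)
      also have "... = a*K-1" unfolding xd by (simp add: algebra_simps)
      finally show ?thesis .
    qed
    then have e1: "xs + (1-xs)*K = (a*K-1)/(a+K-2)" using pos by (simp add: eq_divide_eq)
    have "(xs*a + (1-xs))*(a+K-2) = a*K-1"
    proof -
      have "(xs*a + (1-xs))*(a+K-2) = xs*(a+K-2)*(a-1) + (a+K-2)" by (simp add: algebra_simps)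
      also have "... = a*K-1" unfolding xd by (simp add: algebra_simps)
      finally show ?thesis .
    qed
    then have e2: "xs*a + (1-xs) = (a*K-1)/(a+K-2)" using pos by (simp add: eq_divide_eq)
    have "(SUP x\<in>{0..1}. min (x + (1-x)*K) (x*a + (1-x))) = (a*K-1)/(a+K-2)"
    proof (rule cSup_eq_maximum)
      show "(a*K-1)/(a+K-2) \<in> (\<lambda>x. min (x + (1-x)*K) (x*a + (1-x))) ` {0..1}"
        using xs01 e1 e2 by (intro image_eqI[where x=xs]) auto
    next
      fix z assume "z \<in> (\<lambda>x. min (x + (1-x)*K) (x*a + (1-x))) ` {0..1}"
      then obtain x where x: "0 \<le> x" "x \<le> 1" "z = min (x + (1-x)*K) (x*a + (1-x))" by auto
      show "z \<le> (a*K-1)/(a+K-2)"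
      proof (cases "x \<le> xs")
        case True
        have "x*(a-1) \<le> xs*(a-1)" using True False by (intro mult_right_mono) auto
        then have "x*a + (1-x) \<le> xs*a + (1-xs)" by (simp add: algebra_simps)
        then show ?thesis using x e2 by auto
      next
        case c: False
        have "xs*(K-1) \<le> x*(K-1)" using c K by (intro mult_right_mono) auto
        then have "x + (1-x)*K \<le> xs + (1-xs)*K" by (simp add: algebra_simps)
        then show ?thesis using x e1 by auto
      qed
    qed
    then show ?thesis using v False a_def by simp
  qed
qed

lemma key:
  fixes K l c V :: real and F :: "real \<Rightarrow> real"
  assumes K2: "K \<ge> 2" and c: "c*K = K-1" and l: "0<l" "l<1/3"
  and aV: "(1-l)*(1+c*V) > 1"
  and Vdef: "V = (sqrt ((K-2)^2*l^2 + 4*(1-l)*c*((1-l)*K-1)) - (K-2)*l)/(2*(1-l)*c)"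
  and F: "\<And>v. F v = (if (1-l)*(1+c*v) \<le> 1 then 1 else ((1-l)*(1+c*v)*K-1)/((1-l)*(1+c*v)+K-2))"
  shows "(THE v. v = F v) = V"
proof -
  define m where "m = 1 - l"
  define b where "b = (K-2)*l"
  define e where "e = m*K-1"
  define D where "D = b^2 + 4*m*c*e"
  have m: "2/3 < m" "m < 1" using l by (auto simp: m_def)
  have cpos: "c > 0" using c K2
  proof -
    have "c*K > 0" using c K2 by simp
    then show ?thesis using K2 by (simp add: zero_less_mult_iff)
  qed
  have b0: "b \<ge> 0" using K2 l by (simp add: b_def)
  have e0: "e > 0"
  proof -
    have "m*2 \<le> m*K" using m K2 by (intro mult_left_mono) auto
    then show ?thesis using m unfolding e_def by linarith
  qed
  have D0: "D \<ge> 0" using b0 e0 m cpos unfolding D_def by (simp add: mult_pos_pos)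
  have mc: "m*c > 0" using m cpos by simp
  have nz: "m \<noteq> 0" "c \<noteq> 0" using mc by auto
  have VD: "V = (sqrt D - b)/(2*m*c)" using Vdef unfolding D_def b_def e_def m_def by (simp add: power2_eq_square)
  have quad_iff: "(1+c*v)*m > 1 \<Longrightarrow> (v = ((1+c*v)*m*K-1)/((1+c*v)*m+K-2) \<longleftrightarrow> m*c*v^2 + b*v - e = 0)" for v
  proof -
    assume a1: "(1+c*v)*m > 1"
    have pos: "(1+c*v)*m+K-2 > 0" using a1 K2 by simp
    have "v = ((1+c*v)*m*K-1)/((1+c*v)*m+K-2) \<longleftrightarrow> v*((1+c*v)*m+K-2) = (1+c*v)*m*K-1"
      using pos by (simp add: eq_divide_eq)
    also have "v*((1+c*v)*m+K-2) - ((1+c*v)*m*K-1) = m*c*v^2 + b*v - e"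
    proof -
      have "v*((1+c*v)*m+K-2) - ((1+c*v)*m*K-1) = m*c*v^2 + v*(m+K-2) - m*(c*K)*v - (m*K-1)"
        by (simp add: algebra_simps power2_eq_square)
      also have "... = m*c*v^2 + b*v - e" unfolding c b_def e_def m_def by (simp add: algebra_simps)
      finally show ?thesis .
    qed
    then have "v*((1+c*v)*m+K-2) = (1+c*v)*m*K-1 \<longleftrightarrow> m*c*v^2 + b*v - e = 0" by linarith
    finally show ?thesis .
  qed
  have Fm: "F v = (if (1+c*v)*m \<le> 1 then 1 else ((1+c*v)*m*K-1)/((1+c*v)*m+K-2))" for v
    using F[of v] unfolding m_def by (simp add: mult.commute)
  have sq: "(sqrt D)^2 = D" using D0 by simp
  have Vq: "m*c*V^2 + b*V - e = 0"
  proof -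
    have "2*m*c*V = sqrt D - b" unfolding VD using nz by simp
    then have "2*m*c*V + b = sqrt D" by simp
    then have "(2*m*c*V + b)^2 = D" using sq by simp
    then have "4*(m*c)*(m*c*V^2 + b*V - e) = 0" unfolding D_def by (simp add: algebra_simps power2_eq_square)
    then show ?thesis using nz by simp
  qed
  have aV': "(1+c*V)*m > 1" using aV by (simp add: m_def mult.commute)
  show ?thesis
  proof (rule the_equality)
    show "V = F V" using Fm[of V] aV' quad_iff[OF aV'] Vq by simp
  next
    fix v assume v: "v = F v"
    show "v = V"
    proof (cases "(1+c*v)*m \<le> 1")
      case True
      then have "v = 1" using v Fm[of v] by simp
      then have "(1+c)*m \<le> 1" using True by simp
      moreover have "(1+c)*K*m > K"
      proof -
        have "(1+c)*K = 2*K-1" using c by (simp add: algebra_simps)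
        moreover have "(2*K-1)*m > K"
        proof -
          have "(2*K-1)*(2/3) < (2*K-1)*m" using m K2 by (intro mult_strict_left_mono) auto
          moreover have "K \<le> (2*K-1)*(2/3)" using K2 by (simp add: field_simps)
          ultimately show ?thesis using K2 by linarith
        qed
        ultimately show ?thesis by simp
      qed
      moreover have "K*((1+c)*m) \<le> K*1" using K2 calculation(1) by (intro mult_left_mono) auto
      ultimately show ?thesis by (simp add: algebra_simps)
    next
      case False
      then have a1: "(1+c*v)*m > 1" by simp
      have vq: "m*c*v^2 + b*v - e = 0" using v Fm[of v] False quad_iff[OF a1] by simp
      have "1 + c*v > 1"
      proof (rule ccontr)
        assume "\<not> 1 + c*v > 1"
        then have le: "1 + c*v \<le> 1" by simp
        show False
        proof (cases "1 + c*v \<ge> 0")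
          case True
          have "(1+c*v)*m \<le> (1+c*v)*1" using True m by (intro mult_left_mono) auto
          then show False using a1 le by simp
        next
          case False
          have "(1+c*v)*m \<le> 0" using False m by (intro mult_nonpos_nonneg) auto
          then show False using a1 by simp
        qed
      qed
      then have vpos: "v > 0" using cpos by (simp add: zero_less_mult_iff)
      have "(2*m*c*v + b)^2 = b^2 + 4*m*c*(m*c*v^2 + b*v)" by (simp add: algebra_simps power2_eq_square)
      also have "m*c*v^2 + b*v = e" using vq by simp
      finally have "(2*m*c*v + b)^2 = D" unfolding D_def .
      moreover have "2*m*c*v + b > 0"
      proof -
        have "(m*c)*v > 0" using mc vpos by simp
        then show ?thesis using b0 by (simp add: algebra_simps)
      qed
      ultimately have "2*m*c*v + b = sqrt D" by (metis less_le real_sqrt_unique)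
      then have "sqrt D - b = (2*m*c)*v" by simp
      then show ?thesis unfolding VD using nz by simp
    qed
  qed
qed

theorem theorem3:
  fixes k :: nat
  assumes "k \<ge> 1"
  shows "((\<lambda>l. disc_value
            (\<lambda>i j. if i = 0 \<and> j = 0 then 0 else if i = 1 \<and> j = 1 then real k else 1)
            (\<lambda>i j. if i = 0 \<and> j = 0 then 1 / real k else 1)
            (\<lambda>i j. if i = 1 \<and> j = 1 then real k else if i = 0 \<and> j = 0 then real k else 1) l)
          \<longlongrightarrow> sqrt (real k)) (at_right 0)"
proof -
  define K where "K = real k"
  define c where "c = 1 - 1/K"
  have K1: "K \<ge> 1" using assms by (simp add: K_def)
  have cK: "c*K = K-1" using K1 by (simp add: c_def algebra_simps)
  define F where "F = (\<lambda>l v. if (1-l)*(1+c*v) \<le> 1 then 1 else ((1-l)*(1+c*v)*K-1)/((1-l)*(1+c*v)+K-2))"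
  have dv: "disc_value
            (\<lambda>i j. if i = 0 \<and> j = 0 then 0 else if i = 1 \<and> j = 1 then real k else 1)
            (\<lambda>i j. if i = 0 \<and> j = 0 then 1 / real k else 1)
            (\<lambda>i j. if i = 1 \<and> j = 1 then real k else if i = 0 \<and> j = 0 then real k else 1) l
         = (THE v. v = F l v)" for l
  proof -
    have "val2 (\<lambda>i j. l * (if i = 0 \<and> j = 0 then 0 else if i = 1 \<and> j = 1 then real k else 1)
          + (1 - l) * ((if i = 0 \<and> j = 0 then 1 / real k else 1) *
             (if i = 1 \<and> j = 1 then real k else if i = 0 \<and> j = 0 then real k else 1)
             + (1 - (if i = 0 \<and> j = 0 then 1 / real k else 1)) * v)) = F l v" for v
    proof (subst val2_form[where K=K])
      show "K \<ge> 1" by (rule K1)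
    qed (use K1 in \<open>auto simp: K_def F_def c_def algebra_simps\<close>)
    then show ?thesis unfolding disc_value_def by simp
  qed
  show ?thesis
  proof (cases "k = 1")
    case True
    have ev: "eventually (\<lambda>l. l > 0) (at_right (0::real))"
      by (simp add: eventually_at_right_less)
    have "eventually (\<lambda>l. (THE v. v = F l v) = 1) (at_right (0::real))"
      using ev
    proof (rule eventually_mono)
      fix l :: real assume l: "l > 0"
      have "F l v = 1" for v using True l by (simp add: F_def c_def K_def)
      then show "(THE v. v = F l v) = 1" by simp
    qed
    then show ?thesis unfolding dv using True by (simp add: tendsto_cong)
  next
    case False
    then have K2: "K \<ge> 2" using assms by (simp add: K_def)
    have cpos: "c > 0" using cK K2 by (smt (verit) mult_nonpos_nonneg)
    define V where "V = (\<lambda>l::real. (sqrt ((K-2)^2*l^2 + 4*(1-l)*c*((1-l)*K-1)) - (K-2)*l)/(2*(1-l)*c))"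
    have "isCont V 0" unfolding V_def using cpos by (intro continuous_intros) auto
    then have "(V \<longlongrightarrow> V 0) (at 0)" by (simp add: isCont_def)
    then have tV0: "(V \<longlongrightarrow> V 0) (at_right 0)" by (rule tendsto_mono[OF at_le, rotated]) auto
    have sK: "sqrt (4*c*(K-1)) = 2*(K-1)/sqrt K"
    proof (rule real_sqrt_unique)
      show "(2*(K-1)/sqrt K)^2 = 4*c*(K-1)" using K2 cK
        by (simp add: power_divide power2_eq_square c_def field_simps)
      show "0 \<le> 2*(K-1)/sqrt K" using K2 by simp
    qed
    have "V 0 = (2*(K-1)/sqrt K)/(2*c)" unfolding V_def using sK by simp
    also have "... = K / sqrt K" using K2 cK by (simp add: c_def field_simps)
    also have "... = sqrt K" using K2 by (simp add: real_div_sqrt)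
    finally have tV: "(V \<longlongrightarrow> sqrt K) (at_right 0)" using tV0 by simp
    have "((\<lambda>l. (1-l)*(1+c*V l)) \<longlongrightarrow> (1-0)*(1+c*sqrt K)) (at_right 0)"
      by (intro tendsto_intros tV)
    moreover have "(1-0)*(1+c*sqrt K) > 1" using cpos K2 by simp
    ultimately have ev1: "eventually (\<lambda>l. (1-l)*(1+c*V l) > 1) (at_right 0)"
      by (rule order_tendstoD(1))
    have ev2: "eventually (\<lambda>l. 0 < l \<and> l < (1/3::real)) (at_right 0)"
      unfolding eventually_at_right_field by (intro exI[where x="1/3"]) auto
    have "eventually (\<lambda>l. (THE v. v = F l v) = V l) (at_right 0)"
      using ev1 ev2
    proof eventually_elim
      case (elim l)
      show ?case
        by (rule key[OF K2 cK]) (use elim in \<open>auto simp: V_def F_def\<close>)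
    qed
    then show ?thesis unfolding dv using tV by (simp add: tendsto_cong K_def)
  qed
qed

end
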